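(* Let $e_1,\dots,e_N\in\mathbb{R}^{d_e}$ satisfy $\|e_i\|_2=r$ for all $i$ and $\|e_i-e_j\|_2=f(|i-j|)\ge c|i-j|$ for a positive increasing function $f$ and an absolute constant $c>0$, and let $\Gamma\in\mathbb{R}^{N\times N}$ with $\Gamma_{ij}=\exp(-\|e_i-e_j\|_2^\nu/\ell)$, $\nu\in[1,2]$, $\ell>0$. For an integer $J$ let $\bar\Gamma_{ij}=\Gamma_{ij}\mathbf{1}\{|i-j|<J\}$ and $\Delta\Gamma=\Gamma-\bar\Gamma$. Then for any $\epsilon>0$, taking $$J=\Big\lceil\Big(\frac{\ell}{2c^\nu}\log\big(N\ell/(\epsilon^2c^\nu)\big)\Big)^{1/\nu}\Big\rceil+1$$ gives $\|\Delta\Gamma\|_{\rm F}\le\epsilon$.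
   Context: $\|\cdot\|_{\rm F}$ is the Frobenius norm. *)

theory Defs
  imports "HOL-Analysis.Analysis"
begin

definition frob_norm :: "nat \<Rightarrow> (nat \<Rightarrow> nat \<Rightarrow> real) \<Rightarrow> real" where
  "frob_norm N A = sqrt (\<Sum>i\<in>{1..N}. \<Sum>j\<in>{1..N}. (A i j)\<^sup>2)"

definition Gamma_mat :: "(nat \<Rightarrow> 'a::real_normed_vector) \<Rightarrow> real \<Rightarrow> real \<Rightarrow> nat \<Rightarrow> nat \<Rightarrow> real" where
  "Gamma_mat e \<nu> l i j = exp (- (norm (e i - e j) powr \<nu>) / l)"

definition band_trunc :: "int \<Rightarrow> (nat \<Rightarrow> nat \<Rightarrow> real) \<Rightarrow> nat \<Rightarrow> nat \<Rightarrow> real" where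
  "band_trunc J A i j = (if \<bar>int i - int j\<bar> < J then A i j else 0)"

end

theory Submission imports Defs begin

lemma geo_sum:
  fixes q E :: real and t :: nat
  assumes q: "0 \<le> q" "q < 1" and E: "E \<ge> 0"
  shows "(\<Sum>k<n. (if t < k then E * q ^ (k - t) else 0)) \<le> E * q / (1 - q)"
proof -
  have eq: "(\<Sum>k<n. (if t < k then E * q ^ (k - t) else 0)) = E * (q - q ^ (max n (t+1) - t)) / (1 - q)" for n
  proof (induction n)
    case 0
    then show ?case by simp
  next
    case (Suc n)
    show ?case
    proof (cases "n \<le> t")
      case True
      then have "max (Suc n) (t+1) = max n (t+1)" by simp
      then show ?thesis using Suc True by simp
    next
      case False
      then have m1: "max (Suc n) (t+1) - t = Suc (n - t)" and m2: "max n (t+1) - t = n - t" by auto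
      have "E * (q - q ^ (n - t)) / (1 - q) + E * q ^ (n - t) = E * (q - q ^ Suc (n - t)) / (1 - q)"
        using q by (simp add: field_simps)
      then show ?thesis using Suc False m1 m2 by simp
    qed
  qed
  have "q ^ (max n (t+1) - t) \<ge> 0" using q by simp
  then have "E * (q - q ^ (max n (t+1) - t)) \<le> E * q" using E by (simp add: mult_left_mono)
  then show ?thesis unfolding eq using q by (simp add: divide_right_mono)
qed

lemma powr_superadd:
  fixes x y v :: real
  assumes "x \<ge> 0" "y \<ge> 0" "v \<ge> 1"
  shows "x powr v + y powr v \<le> (x + y) powr v"
proof (cases "x + y = 0")
  case True then have "x = 0" "y = 0" using assms by auto
  then show ?thesis by simp
next
  case False
  then have s: "x + y > 0" using assms by simp
  have aux: "z powr v \<le> (x+y) powr v * (z / (x+y))" if z: "0 \<le> z" "z \<le> x + y" for z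
  proof -
    have "z / (x+y) \<le> 1" "0 \<le> z/(x+y)" using z s by auto
    then have "(z/(x+y)) powr v \<le> (z/(x+y)) powr 1"
      using assms(3) by (intro powr_mono') auto
    then have "(z/(x+y)) powr v \<le> z/(x+y)" using z s by simp
    moreover have "z powr v = (x+y) powr v * (z/(x+y)) powr v"
      using z s by (simp add: powr_divide)
    ultimately show ?thesis by (metis mult_left_mono powr_ge_zero)
  qed
  have "x powr v + y powr v \<le> (x+y) powr v * (x/(x+y)) + (x+y) powr v * (y/(x+y))"
    using aux[of x] aux[of y] assms by (intro add_mono) auto
  also have "\<dots> = (x+y) powr v * ((x+y)/(x+y))" by (simp only: add_divide_distrib distrib_left)
  also have "\<dots> = (x+y) powr v" using s by simp
  finally show ?thesis .
qed

theorem lemma4: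
  fixes e :: "nat \<Rightarrow> real ^ 'd" and N :: nat and r c \<nu> l \<epsilon> :: real
    and f :: "real \<Rightarrow> real" and J :: int
  assumes norm_e: "\<And>i. i \<in> {1..N} \<Longrightarrow> norm (e i) = r"
    and f_pos: "\<And>x. x > 0 \<Longrightarrow> f x > 0"
    and f_mono: "mono_on {0..} f"
    and dist_e: "\<And>i j. i \<in> {1..N} \<Longrightarrow> j \<in> {1..N} \<Longrightarrow>
                   norm (e i - e j) = f \<bar>real i - real j\<bar>"
    and f_lower: "\<And>i j. i \<in> {1..N} \<Longrightarrow> j \<in> {1..N} \<Longrightarrow>
                   f \<bar>real i - real j\<bar> \<ge> c * \<bar>real i - real j\<bar>"
    and c_pos: "c > 0"
    and nu: "1 \<le> \<nu>" "\<nu> \<le> 2"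
    and l_pos: "l > 0"
    and eps_pos: "\<epsilon> > 0"
    and J_def: "J = \<lceil>((l / (2 * c powr \<nu>)) * ln (real N * l / (\<epsilon>\<^sup>2 * c powr \<nu>))) powr (1 / \<nu>)\<rceil> + 1"
  shows "frob_norm N (\<lambda>i j. Gamma_mat e \<nu> l i j - band_trunc J (Gamma_mat e \<nu> l) i j) \<le> \<epsilon>"
proof (cases "N = 0")
  case True
  then show ?thesis unfolding frob_norm_def using eps_pos by simp
next
  case False
  then have Npos: "real N > 0" by simp
  define a where "a = 2 * c powr \<nu> / l"
  have a_pos: "a > 0" unfolding a_def using c_pos l_pos by simp
  define X where "X = real N * l / (\<epsilon>\<^sup>2 * c powr \<nu>)"
  have X_pos: "X > 0" unfolding X_def using Npos l_pos eps_pos c_pos by simp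
  define T where "T = (l / (2 * c powr \<nu>)) * ln X"
  define P where "P = T powr (1 / \<nu>)"
  have P_nn: "P \<ge> 0" unfolding P_def by simp
  define t where "t = nat (ceiling P)"
  have J_P: "J = ceiling P + 1" unfolding J_def P_def T_def X_def by simp
  have "ceiling P \<ge> 0" using P_nn by simp
  then have J_t: "J = int t + 1" unfolding t_def J_P by simp
  have t_ge: "real t \<ge> P" unfolding t_def using P_nn by linarith
  define E where "E = exp (- a * real t powr \<nu>)"
  define q where "q = exp (- a)"
  define h where "h k = (if t < k then E * q ^ (k - t) else 0)" for k :: nat
  have E_nn: "E \<ge> 0" unfolding E_def by simp
  have q0: "0 \<le> q" "q < 1" unfolding q_def using a_pos by auto
  have h_nn: "h k \<ge> 0" for k unfolding h_def using E_nn q0 by simp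
  define D where "D i j = Gamma_mat e \<nu> l i j - band_trunc J (Gamma_mat e \<nu> l) i j" for i j
  have claim1: "(D i j)\<^sup>2 \<le> h (nat \<bar>int i - int j\<bar>)" if ij: "i \<in> {1..N}" "j \<in> {1..N}" for i j
  proof -
    define k where "k = nat \<bar>int i - int j\<bar>"
    have rk: "real k = \<bar>real i - real j\<bar>" unfolding k_def by linarith
    show ?thesis
    proof (cases "t < k")
      case False
      then have "\<bar>int i - int j\<bar> < J" unfolding J_t k_def by linarith
      then have "D i j = 0" unfolding D_def band_trunc_def by simp
      then show ?thesis using h_nn by simp
    next
      case True
      then have "\<not> \<bar>int i - int j\<bar> < J" unfolding J_t k_def by linarith
      then have Dij: "D i j = exp (- (norm (e i - e j) powr \<nu>) / l)"
        unfolding D_def band_trunc_def Gamma_mat_def by simp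
      have nrm: "norm (e i - e j) \<ge> c * real k"
        using dist_e[OF ij] f_lower[OF ij] rk by simp
      have ck: "c * real k \<ge> 0" using c_pos by simp
      have p1: "norm (e i - e j) powr \<nu> \<ge> c powr \<nu> * real k powr \<nu>"
        using powr_mono2[of \<nu> "c * real k" "norm (e i - e j)"] nrm ck nu c_pos
        by (simp add: powr_mult)
      define m where "m = k - t"
      have km: "k = t + m" and m1: "m \<ge> 1" unfolding m_def using True by auto
      have kt: "real k = real t + real m" unfolding km by simp
      have "real m powr \<nu> \<ge> real m powr 1"
        using nu m1 by (intro powr_mono) auto
      then have mm: "real m powr \<nu> \<ge> real m" using m1 by simp
      have p2: "real k powr \<nu> \<ge> real t powr \<nu> + real m"
        using powr_superadd[of "real t" "real m" \<nu>] nu mm unfolding kt by linarith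
      have "(D i j)\<^sup>2 = exp (- 2 * (norm (e i - e j) powr \<nu>) / l)"
        unfolding Dij by (simp add: power2_eq_square exp_add[symmetric])
      also have "\<dots> \<le> exp (- a * real k powr \<nu>)"
      proof -
        have "a * real k powr \<nu> \<le> 2 * (norm (e i - e j) powr \<nu>) / l"
          unfolding a_def using p1 l_pos by (simp add: field_simps)
        then show ?thesis by simp
      qed
      also have "\<dots> \<le> exp (- a * real t powr \<nu> + real m * (- a))"
      proof -
        have "a * (real t powr \<nu> + real m) \<le> a * real k powr \<nu>"
          using p2 a_pos by (intro mult_left_mono) auto
        then show ?thesis by (simp add: algebra_simps)
      qed
      also have "\<dots> = E * q ^ m"
        unfolding E_def q_def by (simp only: exp_add exp_of_nat_mult)
      finally have "(D i j)\<^sup>2 \<le> E * q ^ m" .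
      moreover have "h k = E * q ^ m" unfolding h_def m_def using True by simp
      ultimately show ?thesis unfolding k_def by simp
    qed
  qed
  have claim2: "(\<Sum>j\<in>{1..N}. h (nat \<bar>int i - int j\<bar>)) \<le> 2 * (E * q / (1 - q))" if i: "i \<in> {1..N}" for i
  proof -
    define A where "A = {j \<in> {1..N}. i \<le> j}"
    define B where "B = {j \<in> {1..N}. j \<le> i}"
    have U: "{1..N} = A \<union> B" unfolding A_def B_def by auto
    have fin: "finite A" "finite B" unfolding A_def B_def by auto
    let ?g = "\<lambda>j. h (nat \<bar>int i - int j\<bar>)"
    have "sum ?g (A \<union> B) + sum ?g (A \<inter> B) = sum ?g A + sum ?g B"
      using fin by (rule sum.union_inter)
    moreover have "sum ?g (A \<inter> B) \<ge> 0" using h_nn by (simp add: sum_nonneg)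
    ultimately have s1: "sum ?g {1..N} \<le> sum ?g A + sum ?g B" unfolding U by linarith
    have "sum ?g A = sum (\<lambda>j. h (j - i)) A"
      unfolding A_def by (intro sum.cong) (auto intro: arg_cong[where f=h])
    also have "\<dots> = sum h ((\<lambda>j. j - i) ` A)"
      by (rule sum.reindex[symmetric, unfolded comp_def]) (auto simp: inj_on_def A_def)
    also have "\<dots> \<le> sum h {..<N}"
      by (intro sum_mono2) (use h_nn i in \<open>auto simp: A_def\<close>)
    also have "\<dots> \<le> E * q / (1 - q)" unfolding h_def using geo_sum[OF q0 E_nn] by simp
    finally have sA: "sum ?g A \<le> E * q / (1 - q)" .
    have "sum ?g B = sum (\<lambda>j. h (i - j)) B"
      unfolding B_def by (intro sum.cong) (auto intro: arg_cong[where f=h])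
    also have "\<dots> = sum h ((\<lambda>j. i - j) ` B)"
      by (rule sum.reindex[symmetric, unfolded comp_def]) (auto simp: inj_on_def B_def)
    also have "\<dots> \<le> sum h {..<N}"
      by (intro sum_mono2) (use h_nn i in \<open>auto simp: B_def\<close>)
    also have "\<dots> \<le> E * q / (1 - q)" unfolding h_def using geo_sum[OF q0 E_nn] by simp
    finally have sB: "sum ?g B \<le> E * q / (1 - q)" .
    show ?thesis using s1 sA sB by linarith
  qed
  have claim3: "E * q / (1 - q) \<le> E / a"
  proof -
    have "q / (1 - q) = 1 / (exp a - 1)" unfolding q_def
      by (simp add: exp_minus field_simps)
    also have "\<dots> \<le> 1 / a"
      using a_pos exp_ge_add_one_self[of a] by (intro divide_left_mono) (auto simp: algebra_simps)
    finally have "q / (1 - q) \<le> 1 / a" .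
    then have "E * (q / (1 - q)) \<le> E * (1 / a)" using E_nn by (rule mult_left_mono)
    then show ?thesis by simp
  qed
  have tT: "real t powr \<nu> \<ge> T"
  proof (cases "T > 0")
    case False then show ?thesis by (metis not_less order_trans powr_ge_zero)
  next
    case True
    have "real t powr \<nu> \<ge> P powr \<nu>" using t_ge P_nn nu by (intro powr_mono2) auto
    moreover have "P powr \<nu> = T" unfolding P_def using True nu by (simp add: powr_powr)
    ultimately show ?thesis by simp
  qed
  have aT: "a * T = ln X" unfolding a_def T_def using c_pos l_pos by (simp add: field_simps)
  have claim4: "E \<le> 1 / X"
  proof -
    have "E \<le> exp (- (a * T))" unfolding E_def using tT a_pos by simp
    also have "\<dots> = 1 / X" unfolding aT using X_pos by (simp add: exp_minus inverse_eq_divide)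
    finally show ?thesis .
  qed
  have S: "(\<Sum>i\<in>{1..N}. \<Sum>j\<in>{1..N}. (D i j)\<^sup>2) \<le> \<epsilon>\<^sup>2"
  proof -
    have "(\<Sum>i\<in>{1..N}. \<Sum>j\<in>{1..N}. (D i j)\<^sup>2) \<le> (\<Sum>i\<in>{1..N}. 2 * (E * q / (1 - q)))"
    proof (intro sum_mono)
      fix i assume i: "i \<in> {1..N}"
      have "(\<Sum>j\<in>{1..N}. (D i j)\<^sup>2) \<le> (\<Sum>j\<in>{1..N}. h (nat \<bar>int i - int j\<bar>))"
        using claim1 i by (intro sum_mono) auto
      then show "(\<Sum>j\<in>{1..N}. (D i j)\<^sup>2) \<le> 2 * (E * q / (1 - q))" using claim2[OF i] by linarith
    qed
    also have "\<dots> = real N * (2 * (E * q / (1 - q)))" by simp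
    also have "\<dots> \<le> real N * (2 * (E / a))" using claim3 Npos by (intro mult_left_mono) auto
    also have "\<dots> \<le> real N * (2 * ((1 / X) / a))"
      using claim4 Npos a_pos by (intro mult_left_mono divide_right_mono) auto
    also have "\<dots> = \<epsilon>\<^sup>2" unfolding X_def a_def using Npos l_pos c_pos eps_pos by (simp add: field_simps)
    finally show ?thesis .
  qed
  have "frob_norm N D \<le> sqrt (\<epsilon>\<^sup>2)" unfolding frob_norm_def using S real_sqrt_le_mono by blast
  then show ?thesis unfolding D_def using eps_pos by simp
qed

end
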